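(* Let $P$ be the uniform probability measure on $[0,1]$ and $Q$ a probability measure on $[0,1]$ with density $q$, so $r = dQ/dP = q$. Assume $r$ is unimodal with maximiser $x^*$ and $r_{max} = r(x^* ) = \sup r < \infty$. Then the width function $w$ is non-increasing in $\gamma$ and satisfies $$\int_0^1 w(\gamma)\,d\gamma = \frac{1}{r_{max}} \quad\text{and}\quad w(0) \ge \frac{1}{r_{max}}.$$
   Context: Unimodal: $r$ non-decreasing on $[0,x^*]$ and non-increasing on $[x^*,1]$. For $\gamma\in[0,1]$, the superlevel set is $S(\gamma) = \{x\in[0,1] : r(x) \ge \gamma r_{max}\}$ and the width function is $w(\gamma) = \inf\{\delta\in[0,1] : \exists z\in[0,1],\ S(\gamma)\subseteq[z,z+\delta]\}$. *)

theory Defs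
  imports "HOL-Analysis.Analysis"
begin

definition superlevel :: "(real \<Rightarrow> real) \<Rightarrow> real \<Rightarrow> real \<Rightarrow> real set" where
  "superlevel r rmax \<gamma> = {x \<in> {0..1}. r x \<ge> \<gamma> * rmax}"

definition width :: "(real \<Rightarrow> real) \<Rightarrow> real \<Rightarrow> real \<Rightarrow> real" where
  "width r rmax \<gamma> = Inf {\<delta> \<in> {0..1}. \<exists>z \<in> {0..1}. superlevel r rmax \<gamma> \<subseteq> {z..z+\<delta>}}"

end

theory Submission
  imports Defs
begin

theorem mainTheorem3:
  fixes r :: "real \<Rightarrow> real" and xs :: real
  assumes nonneg: "\<And>x. x \<in> {0..1} \<Longrightarrow> r x \<ge> 0"
    and density: "(r has_integral 1) {0..1}"
    and xs_in: "xs \<in> {0..1}"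
    and incr: "mono_on {0..xs} r"
    and decr: "antimono_on {xs..1} r"
    and rmax: "r xs = (SUP x\<in>{0..1}. r x)"
  shows "antimono_on {0..1} (width r (r xs)) \<and>
         (width r (r xs) has_integral 1 / r xs) {0..1} \<and>
         width r (r xs) 0 \<ge> 1 / r xs"
proof -
  define R where "R = r xs"
  define S where "S = superlevel r R"
  define D where "D = (\<lambda>\<gamma>. {\<delta> \<in> {0..1}. \<exists>z \<in> {0..1}. S \<gamma> \<subseteq> {z..z+\<delta>}})"
  define w where "w = width r R"
  have wD: "w \<gamma> = Inf (D \<gamma>)" for \<gamma> unfolding w_def width_def D_def S_def by simp
  have S_def': "S \<gamma> = {x \<in> {0..1}. r x \<ge> \<gamma> * R}" for \<gamma> unfolding S_def superlevel_def by simp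
  have le_R: "r x \<le> R" if "x \<in> {0..1}" for x
  proof (cases "x \<le> xs")
    case True then show ?thesis using incr that xs_in unfolding R_def monotone_on_def by auto
  next
    case False then show ?thesis using decr that xs_in unfolding R_def monotone_on_def by auto
  qed
  have R1: "1 \<le> R"
  proof -
    have "((\<lambda>x. R) has_integral R) {0..1::real}"
      using has_integral_const_real[of R 0 "1::real"] by simp
    from has_integral_le[OF density this] le_R show ?thesis by auto
  qed
  have Rpos: "R > 0" using R1 by simp
  have D1: "1 \<in> D \<gamma>" for \<gamma> unfolding D_def S_def' by (auto intro!: bexI[of _ 0])
  have Dbdd: "bdd_below (D \<gamma>)" for \<gamma> unfolding D_def by (auto intro!: bdd_belowI[of _ 0])
  have anti: "antimono_on {0..1} w"
  proof (unfold monotone_on_def, intro ballI impI)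
    fix a b :: real assume ab: "a \<in> {0..1}" "b \<in> {0..1}" "a \<le> b"
    have "S b \<subseteq> S a" unfolding S_def' using Rpos ab
      by (auto intro: order_trans[OF mult_right_mono])
    hence "D a \<subseteq> D b" unfolding D_def by blast
    then show "w b \<le> w a" unfolding wD using D1 Dbdd by (intro cInf_superset_mono) auto
  qed
  have w0: "w 0 \<ge> 1"
    unfolding wD
  proof (rule cInf_greatest)
    show "D 0 \<noteq> {}" using D1 by auto
    fix \<delta> assume "\<delta> \<in> D 0"
    then obtain z where z: "z \<in> {0..1}" "S 0 \<subseteq> {z..z+\<delta>}" unfolding D_def by auto
    have "S 0 = {0..1}" unfolding S_def' using nonneg by auto
    with z have "0 \<in> {z..z+\<delta>}" "1 \<in> {z..z+\<delta>}" by auto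
    then show "1 \<le> \<delta>" using z by auto
  qed
  have wnn: "w \<gamma> \<ge> 0" for \<gamma> unfolding wD
    by (rule cInf_greatest) (use D1 in \<open>auto simp: D_def\<close>)
  define g where "g = (\<lambda>x. indicator {0..1} x * r x)"
  have gmeas[measurable]: "g \<in> borel_measurable borel"
  proof -
    have m1: "r \<in> borel_measurable (restrict_space borel {0..xs})"
      by (rule borel_measurable_mono_on_fnc[OF incr])
    have "mono_on {xs<..1} (\<lambda>x. - r x)" using decr unfolding monotone_on_def by auto
    hence "(\<lambda>x. - r x) \<in> borel_measurable (restrict_space borel {xs<..1})"
      by (rule borel_measurable_mono_on_fnc)
    hence "(\<lambda>x. - (- r x)) \<in> borel_measurable (restrict_space borel {xs<..1})"
      by (rule borel_measurable_uminus)
    hence m2: "r \<in> borel_measurable (restrict_space borel {xs<..1})" by simp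
    have h1: "(\<lambda>x. indicator {0..xs} x *\<^sub>R r x) \<in> borel_measurable borel"
      using m1 by (subst (asm) borel_measurable_restrict_space_iff) auto
    have h2: "(\<lambda>x. indicator {xs<..1} x *\<^sub>R r x) \<in> borel_measurable borel"
      using m2 by (subst (asm) borel_measurable_restrict_space_iff) auto
    have "g = (\<lambda>x. indicator {0..xs} x *\<^sub>R r x + indicator {xs<..1} x *\<^sub>R r x)"
      using xs_in by (auto simp: g_def indicator_def fun_eq_iff)
    then show ?thesis using h1 h2 by simp
  qed
  define A where "A = {p::real\<times>real. fst p \<in> {0..1} \<and> snd p \<in> {0..1} \<and> fst p * R \<le> g (snd p)}"
  have Ameas: "A \<in> sets (lborel \<Otimes>\<^sub>M lborel)"
  proof -
    have "{p \<in> space (lborel \<Otimes>\<^sub>M lborel). fst p \<in> {0..1} \<and> snd p \<in> {0..1} \<and> fst p * R \<le> g (snd p)} \<in> sets (lborel \<Otimes>\<^sub>M lborel)"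
      by measurable
    then show ?thesis unfolding A_def by (simp add: space_pair_measure)
  qed
  have Smeas: "S \<gamma> \<in> sets lborel" for \<gamma>
  proof -
    have "S \<gamma> = {x. x \<in> {0..1} \<and> \<gamma> * R \<le> g x}" unfolding S_def' g_def by auto
    also have "\<dots> \<in> sets lborel" by measurable
    finally show ?thesis .
  qed
  have key: "emeasure lborel (S \<gamma>) = ennreal (w \<gamma>)" if \<gamma>: "\<gamma> \<in> {0..1}" for \<gamma>
  proof -
    define T where "T = S \<gamma>"
    have xsT: "xs \<in> T" unfolding T_def S_def' using xs_in \<gamma> Rpos R_def
      by (auto intro: mult_left_le_one_le)
    have T01: "T \<subseteq> {0..1}" unfolding T_def S_def' by auto
    have bb: "bdd_below T" "bdd_above T" using T01 by (meson bdd_below_Icc bdd_below_mono, meson bdd_above_Icc bdd_above_mono)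
    define a where "a = Inf T"
    define b where "b = Sup T"
    have Tab: "T \<subseteq> {a..b}" unfolding a_def b_def using bb by (auto intro: cInf_lower cSup_upper)
    have a0: "0 \<le> a" unfolding a_def using xsT T01 by (intro cInf_greatest) auto
    have b1: "b \<le> 1" unfolding b_def using xsT T01 by (intro cSup_least) auto
    have ab: "a \<le> b" using Tab xsT by auto
    have conv: "y \<in> T" if "x \<in> T" "z \<in> T" "x \<le> y" "y \<le> z" for x y z
    proof -
      have "r y \<ge> min (r x) (r z)"
      proof (cases "y \<le> xs")
        case True
        have "x \<in> {0..xs}" "y \<in> {0..xs}" using True that T01 by auto
        then have "r x \<le> r y" using incr \<open>x \<le> y\<close> unfolding monotone_on_def by blast
        then show ?thesis by simp
      next
        case False
        have "z \<in> {xs..1}" "y \<in> {xs..1}" using False that T01 by auto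
        then have "r z \<le> r y" using decr \<open>y \<le> z\<close> unfolding monotone_on_def by blast
        then show ?thesis by simp
      qed
      then show ?thesis using that T01 unfolding T_def S_def' by auto
    qed
    have ooT: "{a<..<b} \<subseteq> T"
    proof
      fix y assume y: "y \<in> {a<..<b}"
      have "Inf T < y" using y a_def by simp
      then have "\<exists>x\<in>T. x < y" using cInf_less_iff[of T y] xsT bb by blast
      then obtain x where "x \<in> T" "x < y" by blast
      have "y < Sup T" using y b_def by simp
      then have "\<exists>z\<in>T. y < z" using less_cSup_iff[of T y] xsT bb by blast
      then obtain z where "z \<in> T" "y < z" by blast
      show "y \<in> T" using conv[OF \<open>x \<in> T\<close> \<open>z \<in> T\<close>] \<open>x < y\<close> \<open>y < z\<close> by simp
    qed
    have wab: "w \<gamma> = b - a" unfolding wD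
    proof (rule cInf_eq_minimum)
      show "b - a \<in> D \<gamma>" unfolding D_def using a0 b1 ab Tab T_def xsT by (auto intro!: bexI[of _ a])
      fix \<delta> assume "\<delta> \<in> D \<gamma>"
      then obtain z where z: "S \<gamma> \<subseteq> {z..z+\<delta>}" unfolding D_def by auto
      have "z \<le> a" unfolding a_def using xsT z T_def by (intro cInf_greatest) auto
      moreover have "b \<le> z + \<delta>" unfolding b_def using xsT z T_def by (intro cSup_least) auto
      ultimately show "b - a \<le> \<delta>" by simp
    qed
    have "emeasure lborel {a<..<b} \<le> emeasure lborel T" using ooT Smeas T_def by (intro emeasure_mono) auto
    moreover have "emeasure lborel T \<le> emeasure lborel {a..b}" using Tab by (intro emeasure_mono) auto
    ultimately show ?thesis using ab wab T_def by (auto intro: antisym)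
  qed
  have slice1: "(\<integral>\<^sup>+x. indicator A (\<gamma>, x) \<partial>lborel) = ennreal (indicator {0..1} \<gamma> * w \<gamma>)" for \<gamma>
  proof (cases "\<gamma> \<in> {0..1}")
    case True
    have "(\<lambda>x. indicator A (\<gamma>, x) :: ennreal) = indicator (S \<gamma>)"
      using True unfolding A_def S_def' g_def by (auto simp: fun_eq_iff indicator_def)
    then show ?thesis using True key Smeas by simp
  next
    case False
    then have "(\<lambda>x. indicator A (\<gamma>, x) :: ennreal) = (\<lambda>x. 0)"
      unfolding A_def by (auto simp: fun_eq_iff indicator_def)
    then show ?thesis using False by simp
  qed
  have slice2: "(\<integral>\<^sup>+\<gamma>. indicator A (\<gamma>, x) \<partial>lborel) = ennreal (g x / R)" for x
  proof (cases "x \<in> {0..1}")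
    case True
    have h1: "t \<le> 1" if "t * R \<le> r x" for t
    proof (rule ccontr)
      assume "\<not> t \<le> 1"
      then have "1 * R < t * R" using Rpos by (intro mult_strict_right_mono) auto
      then show False using that le_R[OF True] by simp
    qed
    have "(\<lambda>\<gamma>. indicator A (\<gamma>, x) :: ennreal) = indicator {0..r x / R}"
      using True Rpos h1 unfolding A_def g_def
      by (auto simp: fun_eq_iff indicator_def field_simps)
    then show ?thesis using True nonneg[OF True] Rpos by (simp add: g_def)
  next
    case False
    then have "(\<lambda>\<gamma>. indicator A (\<gamma>, x) :: ennreal) = (\<lambda>x. 0)"
      unfolding A_def by (auto simp: fun_eq_iff indicator_def)
    then show ?thesis using False by (simp add: g_def)
  qed
  have fub: "(\<integral>\<^sup>+x. (\<integral>\<^sup>+\<gamma>. indicator A (\<gamma>, x) \<partial>lborel) \<partial>lborel)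
     = (\<integral>\<^sup>+\<gamma>. (\<integral>\<^sup>+x. indicator A (\<gamma>, x) \<partial>lborel) \<partial>lborel)"
    by (rule lborel_pair.Fubini') (use Ameas in simp)
  have rR: "((\<lambda>x. r x / R) has_integral 1 / R) {0..1}"
    using has_integral_cmul[OF density, of "1/R"] by simp
  have I1: "(\<integral>\<^sup>+x. ennreal (g x / R) \<partial>lborel) = ennreal (1 / R)"
    using nn_integral_has_integral_lebesgue[OF _ rR] nonneg Rpos by (simp add: g_def)
  have wint: "w integrable_on {0..1}"
  proof -
    have "mono_on {0..1} (\<lambda>\<gamma>. - w \<gamma>)" using anti unfolding monotone_on_def by auto
    hence "(\<lambda>\<gamma>. - w \<gamma>) integrable_on {0..1}" by (rule integrable_on_mono_on)
    hence "(\<lambda>\<gamma>. - (- w \<gamma>)) integrable_on {0..1}" by (rule integrable_neg)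
    thus ?thesis by simp
  qed
  have I2: "(\<integral>\<^sup>+\<gamma>. ennreal (indicator {0..1} \<gamma> * w \<gamma>) \<partial>lborel) = ennreal (integral {0..1} w)"
    using nn_integral_has_integral_lebesgue[OF _ integrable_integral[OF wint]] wnn by simp
  have "ennreal (integral {0..1} w) = ennreal (1 / R)"
    using I1 I2 fub slice1 slice2 by simp
  moreover have "integral {0..1} w \<ge> 0" using wnn by (intro integral_nonneg wint) auto
  ultimately have "integral {0..1} w = 1 / R" using Rpos by (subst (asm) ennreal_inj) auto
  then have integral: "(w has_integral 1 / R) {0..1}" using integrable_integral[OF wint] by simp
  have "1 / R \<le> 1" using R1 by simp
  then have "1 / R \<le> w 0" using w0 by linarith
  then show ?thesis using anti integral unfolding w_def R_def by auto
qed

end
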